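(* Let $\mathcal{F}$ be a holomorphic foliation by curves defined near a point $p$ of $\mathbb{C}^n$ by the polynomial vector field $X_p=\sum_{j=1}^{n}P_j(z)\frac{\partial}{\partial z_j}$, where, in these coordinates, $W=\{z_1=\cdots=z_d=0\}$ and $m_i=m_W(P_i)$. Then, by a linear change of coordinates $w=Az$ preserving $W$, $\mathcal{F}$ may be described by a polynomial vector field $Y_p=\sum_{j=1}^{n}Q_j(w)\frac{\partial}{\partial w_j}$ with $$m_W(Q_j)=\begin{cases} m'_W(\mathcal F), & j=1,\ldots,d,\\ m_W(\mathcal F), & j=d+1,\ldots,n,\end{cases}$$ where $m'_W(\mathcal{F})=\min\{m_1,\ldots,m_d\}$.
   Context: For a function $P$ written as $P(z)=\sum_{|a|=q}z_1^{a_1}\cdots z_d^{a_d}P_a(z)$, $a=(a_1,\ldots,a_d)\in\mathbb Z_{\ge0}^d$, with at least one $P_a$ not vanishing identically on $\{z_1=\cdots=z_d=0\}$, the multiplicity of $P$ along $W$ is $m_W(P)=q$. The multiplicity of $\mathcal F$ along $W$ is $m_W(\mathcal F)=\min\{m_1,\ldots,m_n\}$. *)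

theory Defs
  imports Complex_Main "HOL-Library.Extended_Nat"
begin

text \<open>Points of C^n are modelled as functions nat => complex, only coordinates
  0..n-1 being relevant (coordinate z_{i+1} of the paper is z i here).\<close>

definition monom_fun :: "nat \<Rightarrow> (nat \<Rightarrow> nat) \<Rightarrow> (nat \<Rightarrow> complex) \<Rightarrow> complex" where
  "monom_fun n \<alpha> z = (\<Prod>i<n. z i ^ \<alpha> i)"

definition poly_fun :: "nat \<Rightarrow> ((nat \<Rightarrow> complex) \<Rightarrow> complex) \<Rightarrow> bool" where
  "poly_fun n f \<longleftrightarrow> (\<exists>c :: (nat \<Rightarrow> nat) \<Rightarrow> complex.
      finite {\<alpha>. c \<alpha> \<noteq> 0} \<and> (\<forall>\<alpha>. c \<alpha> \<noteq> 0 \<longrightarrow> (\<forall>i\<ge>n. \<alpha> i = 0)) \<and>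
      (\<forall>z. f z = (\<Sum>\<alpha>\<in>{\<alpha>. c \<alpha> \<noteq> 0}. c \<alpha> * monom_fun n \<alpha> z)))"

definition multi_idx :: "nat \<Rightarrow> nat \<Rightarrow> (nat \<Rightarrow> nat) set" where
  "multi_idx d q = {a. (\<forall>i\<ge>d. a i = 0) \<and> (\<Sum>i<d. a i) = q}"

definition mult_rep :: "nat \<Rightarrow> nat \<Rightarrow> ((nat \<Rightarrow> complex) \<Rightarrow> complex) \<Rightarrow> nat \<Rightarrow> bool" where
  "mult_rep n d P q \<longleftrightarrow> (\<exists>Pa :: (nat \<Rightarrow> nat) \<Rightarrow> (nat \<Rightarrow> complex) \<Rightarrow> complex.
      (\<forall>a\<in>multi_idx d q. poly_fun n (Pa a)) \<and>
      (\<forall>z. P z = (\<Sum>a\<in>multi_idx d q. (\<Prod>i<d. z i ^ a i) * Pa a z)) \<and>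
      (\<exists>a\<in>multi_idx d q. \<exists>z. (\<forall>i<d. z i = 0) \<and> Pa a z \<noteq> 0))"

text \<open>Multiplicity m_W(P) along W; \<infinity> if no such representation exists (P = 0).\<close>
definition multW :: "nat \<Rightarrow> nat \<Rightarrow> ((nat \<Rightarrow> complex) \<Rightarrow> complex) \<Rightarrow> enat" where
  "multW n d P = (if \<exists>q. mult_rep n d P q then enat (LEAST q. mult_rep n d P q) else \<infinity>)"

definition matvec :: "nat \<Rightarrow> (nat \<Rightarrow> nat \<Rightarrow> complex) \<Rightarrow> (nat \<Rightarrow> complex) \<Rightarrow> (nat \<Rightarrow> complex)" where
  "matvec n A z = (\<lambda>i. if i < n then (\<Sum>k<n. A i k * z k) else 0)"

definition inverse_mats :: "nat \<Rightarrow> (nat \<Rightarrow> nat \<Rightarrow> complex) \<Rightarrow> (nat \<Rightarrow> nat \<Rightarrow> complex) \<Rightarrow> bool" where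
  "inverse_mats n A B \<longleftrightarrow> (\<forall>i<n. \<forall>j<n.
      (\<Sum>k<n. A i k * B k j) = (if i = j then 1 else 0) \<and>
      (\<Sum>k<n. B i k * A k j) = (if i = j then 1 else 0))"

definition Wset :: "nat \<Rightarrow> nat \<Rightarrow> (nat \<Rightarrow> complex) set" where
  "Wset n d = {z. (\<forall>i<d. z i = 0) \<and> (\<forall>i\<ge>n. z i = 0)}"

end

theory Submission imports Defs begin

definition dg :: "nat \<Rightarrow> (nat \<Rightarrow> nat) \<Rightarrow> nat" where
  "dg d \<alpha> = (\<Sum>i<d. \<alpha> i)"

lemma monom_Suc: "monom_fun (Suc n) \<alpha> z = monom_fun n \<alpha> z * z n ^ \<alpha> n"
  by (simp add: monom_fun_def)

lemma monom_cong: "(\<And>i. i < n \<Longrightarrow> z i = z' i) \<Longrightarrow> (\<And>i. i < n \<Longrightarrow> \<alpha> i = \<beta> i)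
   \<Longrightarrow> monom_fun n \<alpha> z = monom_fun n \<beta> z'"
  unfolding monom_fun_def by (rule prod.cong) auto

lemma U_gen:
  fixes h :: "'x \<Rightarrow> complex"
  assumes "finite X" "\<forall>x\<in>X. \<forall>i\<ge>n. g x i = 0"
    and "\<forall>z. (\<Sum>x\<in>X. h x * monom_fun n (g x) z) = 0"
  shows "(\<Sum>x\<in>{x\<in>X. g x = \<alpha>}. h x) = 0"
  using assms
proof (induction n arbitrary: X g h \<alpha>)
  case 0
  have g0: "x \<in> X \<Longrightarrow> g x = (\<lambda>_. 0)" for x using 0(2) by auto
  have "(\<Sum>x\<in>X. h x) = 0" using 0(3) by (simp add: monom_fun_def)
  then show ?case
  proof (cases "\<alpha> = (\<lambda>_. 0)")
    case True
    then have "{x\<in>X. g x = \<alpha>} = X" using g0 by auto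
    then show ?thesis using \<open>(\<Sum>x\<in>X. h x) = 0\<close> by simp
  next
    case False
    then have e: "{x\<in>X. g x = \<alpha>} = {}" using g0 by auto
    show ?thesis by (simp only: e sum.empty)
  qed
next
  case (Suc n)
  define M where "M = Max ((\<lambda>x. g x n) ` X \<union> {0})"
  have fin: "finite X" by fact
  have Mb: "x \<in> X \<Longrightarrow> g x n \<le> M" for x unfolding M_def using fin by (intro Max_ge) auto
  define E where "E k z = (\<Sum>x\<in>{x\<in>X. g x n = k}. h x * monom_fun n (g x) z)" for k z
  have E_ind: "E k (z(n:=y)) = E k z" for k z y
    unfolding E_def by (intro sum.cong refl arg_cong2[where f="(*)"] monom_cong) auto
  have decomp: "(\<Sum>x\<in>X. h x * monom_fun (Suc n) (g x) z) = (\<Sum>k\<le>M. E k z * z n ^ k)" for z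
  proof -
    have "(\<Sum>x\<in>X. h x * monom_fun (Suc n) (g x) z)
       = (\<Sum>k\<le>M. \<Sum>x\<in>{x\<in>X. g x n = k}. h x * monom_fun (Suc n) (g x) z)"
      by (rule sum.group[symmetric]) (use fin Mb in auto)
    also have "\<dots> = (\<Sum>k\<le>M. E k z * z n ^ k)"
      unfolding E_def sum_distrib_right
      by (intro sum.cong refl) (auto simp: monom_Suc mult.assoc)
    finally show ?thesis .
  qed
  have Ez: "E k z = 0" for k z
  proof (cases "k \<le> M")
    case True
    have "\<forall>y. (\<Sum>k\<le>M. E k z * y ^ k) = 0"
    proof
      fix y
      have "(\<Sum>k\<le>M. E k z * y ^ k) = (\<Sum>k\<le>M. E k (z(n:=y)) * (z(n:=y)) n ^ k)"
        by (simp add: E_ind)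
      also have "\<dots> = 0" using decomp Suc.prems(3) by metis
      finally show "(\<Sum>k\<le>M. E k z * y ^ k) = 0" .
    qed
    then show ?thesis using True polyfun_eq_0[of "\<lambda>k. E k z" M] by auto
  next
    case False
    then have e: "{x\<in>X. g x n = k} = {}" using Mb by (auto intro: le_trans)
    show ?thesis unfolding E_def by (simp only: e sum.empty)
  qed
  define X' where "X' = {x\<in>X. g x n = \<alpha> n}"
  define g' where "g' x = (g x)(n:=0)" for x
  have E': "\<forall>z. (\<Sum>x\<in>X'. h x * monom_fun n (g' x) z) = 0"
  proof
    fix z
    have "(\<Sum>x\<in>X'. h x * monom_fun n (g' x) z) = E (\<alpha> n) z"
      unfolding E_def X'_def g'_def by (intro sum.cong refl arg_cong2[where f="(*)"] monom_cong) auto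
    then show "(\<Sum>x\<in>X'. h x * monom_fun n (g' x) z) = 0" using Ez by simp
  qed
  have "(\<Sum>x\<in>{x\<in>X'. g' x = \<alpha>(n:=0)}. h x) = 0"
  proof (rule Suc.IH)
    show "finite X'" using fin by (simp add: X'_def)
    show "\<forall>x\<in>X'. \<forall>i\<ge>n. g' x i = 0" using Suc.prems(2) by (auto simp: X'_def g'_def)
  qed (rule E')
  moreover have "{x\<in>X'. g' x = \<alpha>(n:=0)} = {x\<in>X. g x = \<alpha>}"
  proof -
    have "(g x n = \<alpha> n \<and> (g x)(n:=0) = \<alpha>(n:=0)) \<longleftrightarrow> g x = \<alpha>" for x
      by (metis fun_upd_triv fun_upd_upd)
    then show ?thesis unfolding X'_def g'_def by auto
  qed
  ultimately show ?case by simp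
qed

definition inI :: "nat \<Rightarrow> nat \<Rightarrow> nat \<Rightarrow> ((nat \<Rightarrow> complex) \<Rightarrow> complex) \<Rightarrow> bool" where
  "inI n d q f \<longleftrightarrow> (\<exists>c :: (nat \<Rightarrow> nat) \<Rightarrow> complex.
      finite {\<alpha>. c \<alpha> \<noteq> 0} \<and> (\<forall>\<alpha>. c \<alpha> \<noteq> 0 \<longrightarrow> (\<forall>i\<ge>n. \<alpha> i = 0) \<and> q \<le> dg d \<alpha>) \<and>
      (\<forall>z. f z = (\<Sum>\<alpha>\<in>{\<alpha>. c \<alpha> \<noteq> 0}. c \<alpha> * monom_fun n \<alpha> z)))"

lemma poly_fun_inI: "poly_fun n f \<longleftrightarrow> inI n d 0 f"
  unfolding poly_fun_def inI_def by simp

lemma inI_mono: "q \<le> p \<Longrightarrow> inI n d p f \<Longrightarrow> inI n d q f"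
  unfolding inI_def by (meson le_trans)

lemma gen_inI:
  fixes h :: "'x \<Rightarrow> complex"
  assumes fin: "finite X" and sup: "\<forall>x\<in>X. (\<forall>i\<ge>n. g x i = 0) \<and> q \<le> dg d (g x)"
    and f: "\<forall>z. f z = (\<Sum>x\<in>X. h x * monom_fun n (g x) z)"
  shows "inI n d q f"
proof -
  define c where "c \<alpha> = (\<Sum>x\<in>{x\<in>X. g x = \<alpha>}. h x)" for \<alpha>
  have sub: "{\<alpha>. c \<alpha> \<noteq> 0} \<subseteq> g ` X"
  proof
    fix \<alpha> assume "\<alpha> \<in> {\<alpha>. c \<alpha> \<noteq> 0}"
    then have "c \<alpha> \<noteq> 0" by simp
    have "{x\<in>X. g x = \<alpha>} \<noteq> {}"
    proof
      assume e: "{x\<in>X. g x = \<alpha>} = {}"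
      have "c \<alpha> = 0" unfolding c_def by (simp only: e sum.empty)
      then show False using \<open>c \<alpha> \<noteq> 0\<close> by simp
    qed
    then show "\<alpha> \<in> g ` X" by auto
  qed
  have finc: "finite {\<alpha>. c \<alpha> \<noteq> 0}" using sub fin finite_surj by blast
  have P2: "\<forall>\<alpha>. c \<alpha> \<noteq> 0 \<longrightarrow> (\<forall>i\<ge>n. \<alpha> i = 0) \<and> q \<le> dg d \<alpha>"
  proof (intro allI impI)
    fix \<alpha> assume "c \<alpha> \<noteq> 0"
    then obtain x where "x \<in> X" "\<alpha> = g x" using sub by blast
    then show "(\<forall>i\<ge>n. \<alpha> i = 0) \<and> q \<le> dg d \<alpha>" using sup by auto
  qed
  have P3: "\<forall>z. f z = (\<Sum>\<alpha>\<in>{\<alpha>. c \<alpha> \<noteq> 0}. c \<alpha> * monom_fun n \<alpha> z)"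
  proof
    fix z
    have "f z = (\<Sum>\<alpha>\<in>g ` X. \<Sum>x\<in>{x\<in>X. g x = \<alpha>}. h x * monom_fun n (g x) z)"
    proof -
      have "(\<Sum>\<alpha>\<in>g ` X. \<Sum>x\<in>{x\<in>X. g x = \<alpha>}. h x * monom_fun n (g x) z) = (\<Sum>x\<in>X. h x * monom_fun n (g x) z)"
        by (rule sum.group) (use fin in auto)
      then show ?thesis using f by simp
    qed
    also have "\<dots> = (\<Sum>\<alpha>\<in>g ` X. c \<alpha> * monom_fun n \<alpha> z)"
      unfolding c_def sum_distrib_right by (intro sum.cong refl) auto
    also have "\<dots> = (\<Sum>\<alpha>\<in>{\<alpha>. c \<alpha> \<noteq> 0}. c \<alpha> * monom_fun n \<alpha> z)"
      by (rule sum.mono_neutral_right) (use fin sub in auto)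
    finally show "f z = (\<Sum>\<alpha>\<in>{\<alpha>. c \<alpha> \<noteq> 0}. c \<alpha> * monom_fun n \<alpha> z)" .
  qed
  show ?thesis unfolding inI_def using finc P2 P3 by blast
qed

lemma LC_gen:
  fixes h :: "'x \<Rightarrow> complex"
  assumes fin: "finite X" and sup: "\<forall>x\<in>X. \<forall>i\<ge>n. g x i = 0"
    and f: "\<forall>z. f z = (\<Sum>x\<in>X. h x * monom_fun n (g x) z)"
    and I: "inI n d q f" and nz: "(\<Sum>x\<in>{x\<in>X. g x = \<alpha>}. h x) \<noteq> 0"
  shows "q \<le> dg d \<alpha>"
proof -
  obtain c where c: "finite {\<alpha>. c \<alpha> \<noteq> 0}" "\<forall>\<alpha>. c \<alpha> \<noteq> 0 \<longrightarrow> (\<forall>i\<ge>n. \<alpha> i = 0) \<and> q \<le> dg d \<alpha>"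
      "\<forall>z. f z = (\<Sum>\<alpha>\<in>{\<alpha>. c \<alpha> \<noteq> 0}. c \<alpha> * monom_fun n \<alpha> z)"
    using I unfolding inI_def by blast
  define S where "S = {\<alpha>. c \<alpha> \<noteq> 0}"
  define H where "H = case_sum h (\<lambda>\<beta>. - c \<beta>)"
  define G where "G = case_sum g (\<lambda>\<beta>::nat\<Rightarrow>nat. \<beta>)"
  have finS: "finite S" using c(1) S_def by simp
  have "(\<Sum>y\<in>{y\<in>X <+> S. G y = \<alpha>}. H y) = 0"
  proof (rule U_gen)
    show "finite (X <+> S)" using fin finS by simp
    show "\<forall>x\<in>X <+> S. \<forall>i\<ge>n. G x i = 0" using sup c(2) by (auto simp: G_def S_def)
    show "\<forall>z. (\<Sum>x\<in>X <+> S. H x * monom_fun n (G x) z) = 0"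
    proof
      fix z
      have "(\<Sum>x\<in>X <+> S. H x * monom_fun n (G x) z)
          = (\<Sum>x\<in>X. h x * monom_fun n (g x) z) + (\<Sum>\<beta>\<in>S. - c \<beta> * monom_fun n \<beta> z)"
        by (simp add: sum.Plus[OF fin finS] H_def G_def o_def)
      also have "\<dots> = f z - f z" using f c(3) by (simp add: S_def sum_negf)
      finally show "(\<Sum>x\<in>X <+> S. H x * monom_fun n (G x) z) = 0" by simp
    qed
  qed
  moreover have "{y\<in>X <+> S. G y = \<alpha>} = {x\<in>X. g x = \<alpha>} <+> {\<beta>\<in>S. \<beta> = \<alpha>}"
    by (auto simp: G_def)
  ultimately have "(\<Sum>x\<in>{x\<in>X. g x = \<alpha>}. h x) + (\<Sum>\<beta>\<in>{\<beta>\<in>S. \<beta> = \<alpha>}. - c \<beta>) = 0"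
    using sum.Plus[of "{x\<in>X. g x = \<alpha>}" "{\<beta>\<in>S. \<beta> = \<alpha>}" H] fin finS by (simp add: H_def o_def)
  moreover have "\<alpha> \<notin> S \<Longrightarrow> {\<beta>\<in>S. \<beta> = \<alpha>} = {}" by auto
  ultimately have "\<alpha> \<in> S" using nz by (cases "\<alpha> \<in> S") (auto simp del: Collect_empty_eq)
  then show ?thesis using c(2) S_def by auto
qed


lemma monom_add: "monom_fun n (\<lambda>i. a i + b i) z = monom_fun n a z * monom_fun n b z"
  unfolding monom_fun_def by (simp add: power_add prod.distrib)

lemma dg_add: "dg d (\<lambda>i. a i + b i) = dg d a + dg d b"
  unfolding dg_def by (simp add: sum.distrib)

lemma inI_obtain:
  assumes "inI n d q f"
  obtains c where "finite {\<alpha>. c \<alpha> \<noteq> 0}" "\<forall>\<alpha>. c \<alpha> \<noteq> 0 \<longrightarrow> (\<forall>i\<ge>n. \<alpha> i = 0) \<and> q \<le> dg d \<alpha>"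
      "\<forall>z. f z = (\<Sum>\<alpha>\<in>{\<alpha>. c \<alpha> \<noteq> 0}. c \<alpha> * monom_fun n \<alpha> z)"
  using assms unfolding inI_def by blast

lemma inI_add:
  assumes "inI n d q f" "inI n d q g" shows "inI n d q (\<lambda>z. f z + g z)"
proof -
  obtain c1 where c1: "finite {\<alpha>. c1 \<alpha> \<noteq> 0}" "\<forall>\<alpha>. c1 \<alpha> \<noteq> 0 \<longrightarrow> (\<forall>i\<ge>n. \<alpha> i = 0) \<and> q \<le> dg d \<alpha>"
      "\<forall>z. f z = (\<Sum>\<alpha>\<in>{\<alpha>. c1 \<alpha> \<noteq> 0}. c1 \<alpha> * monom_fun n \<alpha> z)" using assms(1) by (rule inI_obtain)
  obtain c2 where c2: "finite {\<alpha>. c2 \<alpha> \<noteq> 0}" "\<forall>\<alpha>. c2 \<alpha> \<noteq> 0 \<longrightarrow> (\<forall>i\<ge>n. \<alpha> i = 0) \<and> q \<le> dg d \<alpha>"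
      "\<forall>z. g z = (\<Sum>\<alpha>\<in>{\<alpha>. c2 \<alpha> \<noteq> 0}. c2 \<alpha> * monom_fun n \<alpha> z)" using assms(2) by (rule inI_obtain)
  show ?thesis
  proof (rule gen_inI[where X="{\<alpha>. c1 \<alpha> \<noteq> 0} <+> {\<alpha>. c2 \<alpha> \<noteq> 0}" and h="case_sum c1 c2"
        and g="case_sum (\<lambda>\<alpha>. \<alpha>) (\<lambda>\<alpha>. \<alpha>)"])
    show "finite ({\<alpha>. c1 \<alpha> \<noteq> 0} <+> {\<alpha>. c2 \<alpha> \<noteq> 0})" using c1(1) c2(1) by simp
    show "\<forall>x\<in>{\<alpha>. c1 \<alpha> \<noteq> 0} <+> {\<alpha>. c2 \<alpha> \<noteq> 0}. (\<forall>i\<ge>n. case_sum (\<lambda>\<alpha>. \<alpha>) (\<lambda>\<alpha>. \<alpha>) x i = 0) \<and> q \<le> dg d (case_sum (\<lambda>\<alpha>. \<alpha>) (\<lambda>\<alpha>. \<alpha>) x)"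
      using c1(2) c2(2) by auto
    show "\<forall>z. f z + g z = (\<Sum>x\<in>{\<alpha>. c1 \<alpha> \<noteq> 0} <+> {\<alpha>. c2 \<alpha> \<noteq> 0}. case_sum c1 c2 x * monom_fun n (case_sum (\<lambda>\<alpha>. \<alpha>) (\<lambda>\<alpha>. \<alpha>) x) z)"
      using c1 c2 by (simp add: sum.Plus o_def)
  qed
qed

lemma inI_mult:
  assumes "inI n d p f" "inI n d q g" shows "inI n d (p + q) (\<lambda>z. f z * g z)"
proof -
  obtain c1 where c1: "finite {\<alpha>. c1 \<alpha> \<noteq> 0}" "\<forall>\<alpha>. c1 \<alpha> \<noteq> 0 \<longrightarrow> (\<forall>i\<ge>n. \<alpha> i = 0) \<and> p \<le> dg d \<alpha>"
      "\<forall>z. f z = (\<Sum>\<alpha>\<in>{\<alpha>. c1 \<alpha> \<noteq> 0}. c1 \<alpha> * monom_fun n \<alpha> z)" using assms(1) by (rule inI_obtain)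
  obtain c2 where c2: "finite {\<alpha>. c2 \<alpha> \<noteq> 0}" "\<forall>\<alpha>. c2 \<alpha> \<noteq> 0 \<longrightarrow> (\<forall>i\<ge>n. \<alpha> i = 0) \<and> q \<le> dg d \<alpha>"
      "\<forall>z. g z = (\<Sum>\<alpha>\<in>{\<alpha>. c2 \<alpha> \<noteq> 0}. c2 \<alpha> * monom_fun n \<alpha> z)" using assms(2) by (rule inI_obtain)
  define S1 where "S1 = {\<alpha>. c1 \<alpha> \<noteq> 0}"
  define S2 where "S2 = {\<alpha>. c2 \<alpha> \<noteq> 0}"
  show ?thesis
  proof (rule gen_inI[where X="S1 \<times> S2" and h="\<lambda>(a,b). c1 a * c2 b"
        and g="\<lambda>(a,b). (\<lambda>i. a i + b i)"])
    show "finite (S1 \<times> S2)" using c1(1) c2(1) by (simp add: S1_def S2_def)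
    show "\<forall>x\<in>S1 \<times> S2. (\<forall>i\<ge>n. (case x of (a, b) \<Rightarrow> \<lambda>i. a i + b i) i = 0) \<and> p + q \<le> dg d (case x of (a, b) \<Rightarrow> \<lambda>i. a i + b i)"
      using c1(2) c2(2) by (auto simp: S1_def S2_def dg_add add_mono)
    show "\<forall>z. f z * g z = (\<Sum>x\<in>S1 \<times> S2. (case x of (a, b) \<Rightarrow> c1 a * c2 b) * monom_fun n (case x of (a, b) \<Rightarrow> \<lambda>i. a i + b i) z)"
    proof
      fix z
      have "f z * g z = (\<Sum>a\<in>S1. \<Sum>b\<in>S2. (c1 a * monom_fun n a z) * (c2 b * monom_fun n b z))"
        using c1(3) c2(3) by (simp add: S1_def S2_def sum_product)
      also have "\<dots> = (\<Sum>a\<in>S1. \<Sum>b\<in>S2. (c1 a * c2 b) * monom_fun n (\<lambda>i. a i + b i) z)"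
        by (simp add: monom_add mult_ac)
      also have "\<dots> = (\<Sum>x\<in>S1 \<times> S2. (case x of (a, b) \<Rightarrow> c1 a * c2 b) * monom_fun n (case x of (a, b) \<Rightarrow> \<lambda>i. a i + b i) z)"
        by (simp add: sum.cartesian_product split_def)
      finally show "f z * g z = (\<Sum>x\<in>S1 \<times> S2. (case x of (a, b) \<Rightarrow> c1 a * c2 b) * monom_fun n (case x of (a, b) \<Rightarrow> \<lambda>i. a i + b i) z)" .
    qed
  qed
qed

lemma inI_const: "inI n d 0 (\<lambda>z. k)"
  by (rule gen_inI[where X="{()}" and h="\<lambda>_. k" and g="\<lambda>_ _. 0"]) (auto simp: monom_fun_def)

lemma inI_var: "i < n \<Longrightarrow> inI n d (if i < d then 1 else 0) (\<lambda>z. z i)"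
  by (rule gen_inI[where X="{()}" and h="\<lambda>_. 1" and g="\<lambda>_ j. if j = i then 1 else 0"])
     (auto simp: monom_fun_def dg_def if_distrib[where f="\<lambda>e. _ ^ e"] prod.delta' cong: if_cong)

lemma inI_sum: "finite I \<Longrightarrow> (\<And>i. i \<in> I \<Longrightarrow> inI n d q (F i)) \<Longrightarrow> inI n d q (\<lambda>z. \<Sum>i\<in>I. F i z)"
proof (induction I rule: finite_induct)
  case empty
  show ?case by (rule gen_inI[where X="{}::unit set"]) auto
next
  case (insert x F)
  then show ?case by (simp add: inI_add)
qed

lemma inI_prod: "finite I \<Longrightarrow> (\<And>i. i \<in> I \<Longrightarrow> inI n d (e i) (F i)) \<Longrightarrow> inI n d (\<Sum>i\<in>I. e i) (\<lambda>z. \<Prod>i\<in>I. F i z)"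
proof (induction I rule: finite_induct)
  case empty
  then show ?case using inI_const[of n d 1] by simp
next
  case (insert x F)
  then show ?case by (simp add: inI_mult)
qed

lemma inI_power: "inI n d q f \<Longrightarrow> inI n d (q * k) (\<lambda>z. f z ^ k)"
proof (induction k)
  case 0
  then show ?case using inI_const[of n d 1] by simp
next
  case (Suc k)
  then show ?case using inI_mult[of n d q f "q*k" "\<lambda>z. f z ^ k"] by (simp add: add.commute)
qed


lemma dg_restrict: "d \<le> n \<Longrightarrow> (\<Sum>i<n. (if i < d then 1 else 0) * \<alpha> i) = dg d \<alpha>"
proof -
  assume "d \<le> n"
  have "(\<Sum>i<n. (if i < d then 1 else 0) * \<alpha> i) = (\<Sum>i<n. if i < d then \<alpha> i else 0)"
    by (intro sum.cong) auto
  also have "\<dots> = (\<Sum>i\<in>{i\<in>{..<n}. i < d}. \<alpha> i)" by (rule sum.inter_filter[symmetric]) simp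
  also have "{i\<in>{..<n}. i < d} = {..<d}" using \<open>d \<le> n\<close> by auto
  finally show ?thesis by (simp add: dg_def)
qed

lemma inI_comp:
  assumes dn: "d \<le> n" and I: "inI n d q f"
    and M: "\<forall>i<n. inI n d (if i < d then 1 else 0) (\<lambda>z. M z i)"
  shows "inI n d q (\<lambda>z. f (M z))"
proof -
  obtain c where c: "finite {\<alpha>. c \<alpha> \<noteq> 0}" "\<forall>\<alpha>. c \<alpha> \<noteq> 0 \<longrightarrow> (\<forall>i\<ge>n. \<alpha> i = 0) \<and> q \<le> dg d \<alpha>"
      "\<forall>z. f z = (\<Sum>\<alpha>\<in>{\<alpha>. c \<alpha> \<noteq> 0}. c \<alpha> * monom_fun n \<alpha> z)" using I by (rule inI_obtain)
  have T: "inI n d q (\<lambda>z. c \<alpha> * monom_fun n \<alpha> (M z))" if "\<alpha> \<in> {\<alpha>. c \<alpha> \<noteq> 0}" for \<alpha>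
  proof -
    have "inI n d (\<Sum>i<n. (if i < d then 1 else 0) * \<alpha> i) (\<lambda>z. \<Prod>i<n. M z i ^ \<alpha> i)"
      by (rule inI_prod) (use M inI_power in auto)
    then have "inI n d (dg d \<alpha>) (\<lambda>z. monom_fun n \<alpha> (M z))"
      using dg_restrict[OF dn] by (simp add: monom_fun_def)
    then have "inI n d (0 + dg d \<alpha>) (\<lambda>z. c \<alpha> * monom_fun n \<alpha> (M z))"
      by (rule inI_mult[OF inI_const])
    then show ?thesis using c(2) that by (auto intro: inI_mono)
  qed
  have "inI n d q (\<lambda>z. \<Sum>\<alpha>\<in>{\<alpha>. c \<alpha> \<noteq> 0}. c \<alpha> * monom_fun n \<alpha> (M z))"
    by (rule inI_sum) (use c(1) T in auto)
  then show ?thesis using c(3) by simp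
qed

lemma poly_dep:
  assumes "poly_fun n f" "\<forall>i<n. z i = z' i" shows "f z = f z'"
proof -
  obtain c where c: "\<forall>z. f z = (\<Sum>\<alpha>\<in>{\<alpha>. c \<alpha> \<noteq> 0}. c \<alpha> * monom_fun n \<alpha> z)"
    using assms(1) unfolding poly_fun_def by blast
  have "monom_fun n \<alpha> z = monom_fun n \<alpha> z'" for \<alpha> using assms(2) by (intro monom_cong) auto
  then show ?thesis using c by simp
qed

lemma multi_idx_finite: "finite (multi_idx d q)"
proof -
  have "multi_idx d q \<subseteq> (\<lambda>xs i. if i < d then xs ! i else 0) ` {xs. set xs \<subseteq> {..q} \<and> length xs = d}"
  proof
    fix a assume a: "a \<in> multi_idx d q"
    then have a0: "\<forall>i\<ge>d. a i = 0" and as: "(\<Sum>i<d. a i) = q" by (auto simp: multi_idx_def)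
    have le: "a i \<le> q" if "i < d" for i
    proof -
      have "a i \<le> (\<Sum>i<d. a i)" using that by (intro member_le_sum) auto
      then show ?thesis using as by simp
    qed
    have "a = (\<lambda>i. if i < d then map a [0..<d] ! i else 0)" using a0 by (auto simp: fun_eq_iff)
    moreover have "map a [0..<d] \<in> {xs. set xs \<subseteq> {..q} \<and> length xs = d}" using le by auto
    ultimately show "a \<in> (\<lambda>xs i. if i < d then xs ! i else 0) ` {xs. set xs \<subseteq> {..q} \<and> length xs = d}"
      by blast
  qed
  then show ?thesis by (rule finite_subset) (intro finite_imageI finite_lists_length_eq, simp)
qed

lemma sel_ex: "q \<le> dg d \<alpha> \<Longrightarrow> \<exists>a. a \<in> multi_idx d q \<and> (\<forall>i. a i \<le> \<alpha> i)"
proof (induction q)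
  case 0
  show ?case by (rule exI[of _ "\<lambda>_. 0"]) (simp add: multi_idx_def)
next
  case (Suc q)
  then obtain a where a: "a \<in> multi_idx d q" "\<forall>i. a i \<le> \<alpha> i" by auto
  have "\<exists>i<d. a i < \<alpha> i"
  proof (rule ccontr)
    assume "\<not> ?thesis"
    then have "(\<Sum>i<d. \<alpha> i) \<le> (\<Sum>i<d. a i)" using a(2) by (intro sum_mono) (meson lessThan_iff not_less)
    then show False using a(1) Suc.prems by (simp add: multi_idx_def dg_def)
  qed
  then obtain j where j: "j < d" "a j < \<alpha> j" by auto
  define a' where "a' = (\<lambda>i. a i + (if i = j then 1 else 0))"
  have "(\<Sum>i<d. a' i) = (\<Sum>i<d. a i) + 1" using j(1) by (simp add: a'_def sum.distrib)
  then have "a' \<in> multi_idx d (Suc q)" using a(1) j(1) by (auto simp: multi_idx_def a'_def)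
  moreover have "\<forall>i. a' i \<le> \<alpha> i" using a(2) j(2) by (auto simp: a'_def)
  ultimately show ?case by blast
qed


lemma monom_MI: "a \<in> multi_idx d q \<Longrightarrow> d \<le> n \<Longrightarrow> monom_fun n a z = (\<Prod>i<d. z i ^ a i)"
  unfolding monom_fun_def multi_idx_def
  by (intro prod.mono_neutral_right) auto

lemma monom_zd:
  assumes "d \<le> n"
  shows "monom_fun n \<beta> (\<lambda>i. if i < d then 0 else z i) = (if \<forall>i<d. \<beta> i = 0 then monom_fun n \<beta> z else 0)"
proof (cases "\<forall>i<d. \<beta> i = 0")
  case True
  then show ?thesis unfolding monom_fun_def by (auto intro: prod.cong)
next
  case False
  then obtain i where i: "i < d" "\<beta> i \<noteq> 0" by auto
  then have "\<exists>i\<in>{..<n}. (if i < d then 0 else z i) ^ \<beta> i = 0" using assms by (intro bexI[of _ i]) auto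
  then have "(\<Prod>i<n. (if i < d then 0 else z i) ^ \<beta> i) = 0" by (intro prod_zero) auto
  moreover have "(if \<forall>i<d. \<beta> i = 0 then monom_fun n \<beta> z else 0) = 0" by (rule if_not_P[OF False])
  ultimately show ?thesis unfolding monom_fun_def by metis
qed

lemma monom_nz_W:
  assumes "d \<le> n" "\<forall>i<d. z i = 0" "monom_fun n \<beta> z \<noteq> 0" shows "\<forall>i<d. \<beta> i = 0"
proof (rule ccontr)
  assume "\<not> (\<forall>i<d. \<beta> i = 0)"
  then obtain i where i: "i < d" "\<beta> i \<noteq> 0" by auto
  then have "\<exists>i\<in>{..<n}. z i ^ \<beta> i = 0" using assms by (intro bexI[of _ i]) auto
  then show False using assms(3) unfolding monom_fun_def by (simp add: prod_zero)
qed

lemma R_dir: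
  assumes dn: "d \<le> n" and mr: "mult_rep n d f q"
  shows "inI n d q f \<and> \<not> inI n d (Suc q) f"
proof -
  obtain Pa where pa: "\<forall>a\<in>multi_idx d q. poly_fun n (Pa a)"
    and rep: "\<forall>z. f z = (\<Sum>a\<in>multi_idx d q. (\<Prod>i<d. z i ^ a i) * Pa a z)"
    and nz: "\<exists>a\<in>multi_idx d q. \<exists>z. (\<forall>i<d. z i = 0) \<and> Pa a z \<noteq> 0"
    using mr unfolding mult_rep_def by blast
  define MI where "MI = multi_idx d q"
  have finMI: "finite MI" by (simp add: MI_def multi_idx_finite)
  define ca where "ca a = (SOME c. finite {\<alpha>. c \<alpha> \<noteq> 0} \<and> (\<forall>\<alpha>. c \<alpha> \<noteq> 0 \<longrightarrow> (\<forall>i\<ge>n. \<alpha> i = 0)) \<and>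
      (\<forall>z. Pa a z = (\<Sum>\<alpha>\<in>{\<alpha>. c \<alpha> \<noteq> 0}. c \<alpha> * monom_fun n \<alpha> z)))" for a
  have ca: "finite {\<alpha>. ca a \<alpha> \<noteq> 0} \<and> (\<forall>\<alpha>. ca a \<alpha> \<noteq> 0 \<longrightarrow> (\<forall>i\<ge>n. \<alpha> i = 0)) \<and>
      (\<forall>z. Pa a z = (\<Sum>\<alpha>\<in>{\<alpha>. ca a \<alpha> \<noteq> 0}. ca a \<alpha> * monom_fun n \<alpha> z))" if "a \<in> MI" for a
  proof -
    have "\<exists>c. finite {\<alpha>. c \<alpha> \<noteq> 0} \<and> (\<forall>\<alpha>. c \<alpha> \<noteq> 0 \<longrightarrow> (\<forall>i\<ge>n. \<alpha> i = 0)) \<and>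
      (\<forall>z. Pa a z = (\<Sum>\<alpha>\<in>{\<alpha>. c \<alpha> \<noteq> 0}. c \<alpha> * monom_fun n \<alpha> z))"
      using pa that unfolding poly_fun_def MI_def by blast
    then show ?thesis unfolding ca_def by (rule someI_ex)
  qed
  define Sa where "Sa a = {\<alpha>. ca a \<alpha> \<noteq> 0}" for a
  define X where "X = Sigma MI Sa"
  define h where "h = (\<lambda>(a, \<beta>). ca a \<beta>)"
  define g where "g = (\<lambda>(a::nat\<Rightarrow>nat, \<beta>::nat\<Rightarrow>nat). \<lambda>i. a i + \<beta> i)"
  have finX: "finite X" unfolding X_def using finMI ca by (auto simp: Sa_def)
  have dga: "a \<in> MI \<Longrightarrow> dg d a = q" for a by (simp add: MI_def multi_idx_def dg_def)
  have supX: "\<forall>x\<in>X. (\<forall>i\<ge>n. g x i = 0)"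
    using ca dn by (fastforce simp: X_def g_def Sa_def MI_def multi_idx_def)
  have degX: "\<forall>x\<in>X. q \<le> dg d (g x)" by (auto simp: X_def g_def dg_add dga)
  have frep: "\<forall>z. f z = (\<Sum>x\<in>X. h x * monom_fun n (g x) z)"
  proof
    fix z
    have "f z = (\<Sum>a\<in>MI. monom_fun n a z * (\<Sum>\<beta>\<in>Sa a. ca a \<beta> * monom_fun n \<beta> z))"
      using rep ca monom_MI[OF _ dn] by (simp add: MI_def Sa_def)
    also have "\<dots> = (\<Sum>a\<in>MI. \<Sum>\<beta>\<in>Sa a. ca a \<beta> * monom_fun n (\<lambda>i. a i + \<beta> i) z)"
      by (simp add: sum_distrib_left monom_add mult_ac)
    also have "\<dots> = (\<Sum>x\<in>X. h x * monom_fun n (g x) z)"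
    proof -
      have "\<forall>a\<in>MI. finite (Sa a)" using ca by (simp add: Sa_def)
      then show ?thesis
        unfolding X_def h_def g_def using sum.Sigma[OF finMI, of Sa "\<lambda>a \<beta>. ca a \<beta> * monom_fun n (\<lambda>i. a i + \<beta> i) z"]
        by (simp add: split_def)
    qed
    finally show "f z = (\<Sum>x\<in>X. h x * monom_fun n (g x) z)" .
  qed
  have I: "inI n d q f" by (rule gen_inI[OF finX _ frep]) (use supX degX in auto)
  have notI: "\<not> inI n d (Suc q) f"
  proof
    assume I1: "inI n d (Suc q) f"
    obtain a0 z0 where a0: "a0 \<in> MI" "\<forall>i<d. z0 i = 0" "Pa a0 z0 \<noteq> 0" using nz MI_def by blast
    then have "(\<Sum>\<beta>\<in>Sa a0. ca a0 \<beta> * monom_fun n \<beta> z0) \<noteq> 0" using ca by (simp add: Sa_def)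
    then obtain \<beta>0 where b0: "\<beta>0 \<in> Sa a0" "ca a0 \<beta>0 * monom_fun n \<beta>0 z0 \<noteq> 0"
      by (meson sum.neutral)
    have b0d: "\<forall>i<d. \<beta>0 i = 0" using monom_nz_W[OF dn a0(2)] b0(2) by simp
    have dgb0: "dg d \<beta>0 = 0" using b0d by (simp add: dg_def)
    have single: "{x\<in>X. g x = g (a0, \<beta>0)} = {(a0, \<beta>0)}"
    proof (intro equalityI subsetI)
      fix x assume "x \<in> {x\<in>X. g x = g (a0, \<beta>0)}"
      then obtain a \<beta> where x: "x = (a, \<beta>)" "a \<in> MI" "\<beta> \<in> Sa a" "(\<lambda>i. a i + \<beta> i) = (\<lambda>i. a0 i + \<beta>0 i)"
        by (auto simp: X_def g_def)
      have "dg d (\<lambda>i. a i + \<beta> i) = dg d (\<lambda>i. a0 i + \<beta>0 i)" using x(4) by simp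
      then have "dg d \<beta> = 0" using dga x(2) a0(1) dgb0 by (simp add: dg_add)
      then have bd: "\<forall>i<d. \<beta> i = 0" by (simp add: dg_def)
      have "a = a0"
      proof
        fix i show "a i = a0 i"
        proof (cases "i < d")
          case True then show ?thesis using bd b0d fun_cong[OF x(4), of i] by simp
        next
          case False then show ?thesis using x(2) a0(1) by (simp add: MI_def multi_idx_def)
        qed
      qed
      moreover have "\<beta> = \<beta>0" using x(4) \<open>a = a0\<close> by (auto simp: fun_eq_iff)
      ultimately show "x \<in> {(a0, \<beta>0)}" using x(1) by simp
    next
      fix x assume "x \<in> {(a0, \<beta>0)}"
      then show "x \<in> {x\<in>X. g x = g (a0, \<beta>0)}" using a0(1) b0(1) by (simp add: X_def)
    qed
    have "(\<Sum>x\<in>{x\<in>X. g x = g (a0, \<beta>0)}. h x) \<noteq> 0" using single b0(2) by (simp add: h_def)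
    then have "Suc q \<le> dg d (g (a0, \<beta>0))" by (rule LC_gen[OF finX supX frep I1])
    then show False using dga[OF a0(1)] dgb0 by (simp add: g_def dg_add)
  qed
  show ?thesis using I notI by blast
qed


lemma E_dir:
  assumes dn: "d \<le> n" and pf: "poly_fun n f" and I: "inI n d q f" and nI: "\<not> inI n d (Suc q) f"
  shows "mult_rep n d f q"
proof -
  obtain c where c: "finite {\<alpha>. c \<alpha> \<noteq> 0}" "\<forall>\<alpha>. c \<alpha> \<noteq> 0 \<longrightarrow> (\<forall>i\<ge>n. \<alpha> i = 0)"
      "\<forall>z. f z = (\<Sum>\<alpha>\<in>{\<alpha>. c \<alpha> \<noteq> 0}. c \<alpha> * monom_fun n \<alpha> z)"
    using pf unfolding poly_fun_def by blast
  define S where "S = {\<alpha>. c \<alpha> \<noteq> 0}"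
  have finS: "finite S" using c(1) by (simp add: S_def)
  have supS: "\<forall>x\<in>S. \<forall>i\<ge>n. x i = 0" using c(2) by (simp add: S_def)
  have repS: "\<forall>z. f z = (\<Sum>x\<in>S. c x * monom_fun n x z)" using c(3) by (simp add: S_def)
  have degS: "q \<le> dg d \<alpha>" if "\<alpha> \<in> S" for \<alpha>
  proof -
    have "{x\<in>S. x = \<alpha>} = {\<alpha>}" using that by auto
    then have "(\<Sum>x\<in>{x\<in>S. x = \<alpha>}. c x) \<noteq> 0" using that by (simp add: S_def)
    then show ?thesis by (rule LC_gen[OF finS supS repS I])
  qed
  obtain \<alpha>0 where a0: "\<alpha>0 \<in> S" "dg d \<alpha>0 = q"
  proof -
    have "\<exists>\<alpha>0\<in>S. dg d \<alpha>0 = q"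
    proof (rule ccontr)
      assume "\<not> ?thesis"
      then have "\<forall>\<alpha>\<in>S. Suc q \<le> dg d \<alpha>" using degS by (auto simp: Suc_le_eq order_less_le)
      then have "inI n d (Suc q) f" unfolding inI_def using c by (auto simp: S_def)
      then show False using nI by simp
    qed
    then show ?thesis using that by blast
  qed
  define MI where "MI = multi_idx d q"
  have finMI: "finite MI" by (simp add: MI_def multi_idx_finite)
  define sel where "sel \<alpha> = (SOME a. a \<in> MI \<and> (\<forall>i. a i \<le> \<alpha> i))" for \<alpha>
  have sel: "sel \<alpha> \<in> MI \<and> (\<forall>i. sel \<alpha> i \<le> \<alpha> i)" if "\<alpha> \<in> S" for \<alpha>
    using someI_ex[OF sel_ex[OF degS[OF that]]] unfolding sel_def MI_def by simp
  define Pa where "Pa a z = (\<Sum>\<alpha>\<in>{\<alpha>\<in>S. sel \<alpha> = a}. c \<alpha> * monom_fun n (\<lambda>i. \<alpha> i - a i) z)" for a z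
  have Pa_poly: "poly_fun n (Pa a)" for a
    unfolding poly_fun_inI[of n _ d]
    by (rule gen_inI[where X="{\<alpha>\<in>S. sel \<alpha> = a}" and h=c and g="\<lambda>\<alpha> i. \<alpha> i - a i"])
       (use finS supS in \<open>auto simp: Pa_def\<close>)
  have rep: "f z = (\<Sum>a\<in>MI. (\<Prod>i<d. z i ^ a i) * Pa a z)" for z
  proof -
    have "(\<Sum>a\<in>MI. (\<Prod>i<d. z i ^ a i) * Pa a z)
        = (\<Sum>a\<in>MI. \<Sum>\<alpha>\<in>{\<alpha>\<in>S. sel \<alpha> = a}. c \<alpha> * (monom_fun n a z * monom_fun n (\<lambda>i. \<alpha> i - a i) z))"
      using monom_MI[OF _ dn] unfolding Pa_def MI_def by (simp add: sum_distrib_left mult_ac)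
    also have "\<dots> = (\<Sum>a\<in>MI. \<Sum>\<alpha>\<in>{\<alpha>\<in>S. sel \<alpha> = a}. c \<alpha> * monom_fun n \<alpha> z)"
    proof (intro sum.cong refl)
      fix a \<alpha> assume "\<alpha> \<in> {\<alpha>\<in>S. sel \<alpha> = a}"
      then have "\<forall>i. a i \<le> \<alpha> i" using sel by auto
      then have "(\<lambda>i. a i + (\<alpha> i - a i)) = \<alpha>" by auto
      then show "c \<alpha> * (monom_fun n a z * monom_fun n (\<lambda>i. \<alpha> i - a i) z) = c \<alpha> * monom_fun n \<alpha> z"
        using monom_add[of n a "\<lambda>i. \<alpha> i - a i" z] by simp
    qed
    also have "\<dots> = (\<Sum>\<alpha>\<in>S. c \<alpha> * monom_fun n \<alpha> z)"
    proof (rule sum.group[OF finS finMI])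
      show "sel ` S \<subseteq> MI" using sel by blast
    qed
    finally show ?thesis using repS by simp
  qed
  define a0 where "a0 = sel \<alpha>0"
  have a0MI: "a0 \<in> MI" and a0le: "\<forall>i. a0 i \<le> \<alpha>0 i" using sel[OF a0(1)] by (auto simp: a0_def)
  have a0eq: "\<forall>i<d. \<alpha>0 i - a0 i = 0"
  proof -
    have "(\<Sum>i<d. \<alpha>0 i - a0 i) = (\<Sum>i<d. \<alpha>0 i) - (\<Sum>i<d. a0 i)"
      using a0le by (intro sum_subtractf_nat) auto
    also have "\<dots> = 0" using a0(2) a0MI by (simp add: dg_def MI_def multi_idx_def)
    finally show ?thesis by simp
  qed
  have nzW: "\<exists>z. (\<forall>i<d. z i = 0) \<and> Pa a0 z \<noteq> 0"
  proof (rule ccontr)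
    assume "\<not> ?thesis"
    then have Z: "Pa a0 (\<lambda>i. if i < d then 0 else z i) = 0" for z
    proof -
      assume nn: "\<not> (\<exists>z. (\<forall>i<d. z i = 0) \<and> Pa a0 z \<noteq> 0)"
      show ?thesis using nn[unfolded not_ex, rule_format, of "\<lambda>i. if i < d then 0 else z i"] by simp
    qed
    define X0 where "X0 = {\<alpha>\<in>S. sel \<alpha> = a0}"
    define h where "h \<alpha> = (if \<forall>i<d. \<alpha> i - a0 i = 0 then c \<alpha> else 0)" for \<alpha>
    define g where "g \<alpha> = (\<lambda>i. \<alpha> i - a0 i)" for \<alpha> :: "nat \<Rightarrow> nat"
    have "(\<Sum>x\<in>{x\<in>X0. g x = g \<alpha>0}. h x) = 0"
    proof (rule U_gen)
      show "finite X0" using finS by (simp add: X0_def)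
      show "\<forall>x\<in>X0. \<forall>i\<ge>n. g x i = 0" using supS by (auto simp: X0_def g_def)
      show "\<forall>z. (\<Sum>x\<in>X0. h x * monom_fun n (g x) z) = 0"
      proof
        fix z
        have "(\<Sum>x\<in>X0. h x * monom_fun n (g x) z) = Pa a0 (\<lambda>i. if i < d then 0 else z i)"
          unfolding Pa_def X0_def h_def g_def monom_zd[OF dn] by (intro sum.cong refl) auto
        then show "(\<Sum>x\<in>X0. h x * monom_fun n (g x) z) = 0" using Z by simp
      qed
    qed
    moreover have "{x\<in>X0. g x = g \<alpha>0} = {\<alpha>0}"
    proof (intro equalityI subsetI)
      fix x assume x: "x \<in> {x\<in>X0. g x = g \<alpha>0}"
      then have "\<forall>i. a0 i \<le> x i" using sel by (auto simp: X0_def)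
      have gx: "(\<lambda>i. x i - a0 i) = (\<lambda>i. \<alpha>0 i - a0 i)" using x by (simp add: g_def)
      have "x = \<alpha>0"
      proof
        fix i
        have "x i - a0 i = \<alpha>0 i - a0 i" using fun_cong[OF gx, of i] by simp
        then show "x i = \<alpha>0 i" using \<open>\<forall>i. a0 i \<le> x i\<close> a0le
          by (metis le_add_diff_inverse)
      qed
      then show "x \<in> {\<alpha>0}" by simp
    next
      fix x assume "x \<in> {\<alpha>0}"
      then show "x \<in> {x\<in>X0. g x = g \<alpha>0}" using a0(1) by (simp add: X0_def a0_def)
    qed
    ultimately have "h \<alpha>0 = 0" by simp
    then show False using a0eq a0(1) by (simp add: h_def S_def)
  qed
  have A1: "\<forall>a\<in>multi_idx d q. poly_fun n (Pa a)" using Pa_poly by simp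
  have A2: "\<forall>z. f z = (\<Sum>a\<in>multi_idx d q. (\<Prod>i<d. z i ^ a i) * Pa a z)" using rep by (simp add: MI_def)
  have A3: "\<exists>a\<in>multi_idx d q. \<exists>z. (\<forall>i<d. z i = 0) \<and> Pa a z \<noteq> 0"
    using nzW a0MI unfolding MI_def by (intro bexI[of _ a0])
  show ?thesis unfolding mult_rep_def by (intro exI[of _ Pa] conjI A1 A2 A3)
qed


lemma MW:
  assumes dn: "d \<le> n" and pf: "poly_fun n f"
  shows "enat q \<le> multW n d f \<longleftrightarrow> inI n d q f"
proof (cases "\<forall>p. inI n d p f")
  case True
  have "\<not> (\<exists>q. mult_rep n d f q)"
  proof
    assume "\<exists>q. mult_rep n d f q"
    then obtain q where "mult_rep n d f q" by blast
    then show False using R_dir[OF dn] True by blast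
  qed
  then show ?thesis using True by (simp add: multW_def)
next
  case False
  define p0 where "p0 = (LEAST p. \<not> inI n d p f)"
  from False obtain p1 where "\<not> inI n d p1 f" by blast
  then have np0: "\<not> inI n d p0 f" unfolding p0_def by (rule LeastI)
  have I0: "inI n d 0 f" using pf poly_fun_inI by blast
  have "p0 \<noteq> 0"
  proof
    assume "p0 = 0" then show False using I0 np0 by simp
  qed
  then obtain q0 where q0: "p0 = Suc q0" using not0_implies_Suc by blast
  have Iq0: "inI n d q0 f"
  proof (rule ccontr)
    assume "\<not> inI n d q0 f"
    then have "p0 \<le> q0" unfolding p0_def by (rule Least_le)
    then show False using q0 by simp
  qed
  have nI: "\<not> inI n d (Suc q0) f" using np0 q0 by simp
  have mr: "mult_rep n d f q0" by (rule E_dir[OF dn pf Iq0 nI])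
  have uniq: "q = q0" if "mult_rep n d f q" for q
  proof -
    have h: "inI n d q f" "\<not> inI n d (Suc q) f" using R_dir[OF dn that] by auto
    show ?thesis
    proof (rule ccontr)
      assume "q \<noteq> q0"
      then consider "Suc q \<le> q0" | "Suc q0 \<le> q" by linarith
      then show False
      proof cases
        case 1 then show False using inI_mono[OF 1 Iq0] h(2) by simp
      next
        case 2 then show False using inI_mono[OF 2 h(1)] nI by simp
      qed
    qed
  qed
  have "(LEAST q. mult_rep n d f q) = q0"
  proof (rule Least_equality)
    show "mult_rep n d f q0" by (rule mr)
    fix y assume "mult_rep n d f y" then show "q0 \<le> y" using uniq by simp
  qed
  then have mw: "multW n d f = enat q0" using mr by (auto simp: multW_def)
  show ?thesis
  proof
    assume "enat q \<le> multW n d f"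
    then have "q \<le> q0" using mw by simp
    then show "inI n d q f" using inI_mono Iq0 by blast
  next
    assume Iq: "inI n d q f"
    have "q \<le> q0"
    proof (rule ccontr)
      assume "\<not> q \<le> q0"
      then have "Suc q0 \<le> q" by simp
      then show False using inI_mono[OF _ Iq] nI by blast
    qed
    then show "enat q \<le> multW n d f" using mw by simp
  qed
qed

lemma enat_eqI: "(\<And>q. enat q \<le> x \<longleftrightarrow> enat q \<le> y) \<Longrightarrow> x = (y::enat)"
proof -
  assume h: "\<And>q. enat q \<le> x \<longleftrightarrow> enat q \<le> y"
  show "x = y"
  proof (cases x)
    case (enat a)
    then show ?thesis
    proof (cases y)
      case (enat b)
      then show ?thesis using h[of a] h[of b] \<open>x = enat a\<close> by simp
    next
      case infinity
      then show ?thesis using h[of "Suc a"] \<open>x = enat a\<close> by simp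
    qed
  next
    case infinity
    then show ?thesis
    proof (cases y)
      case (enat b)
      then show ?thesis using h[of "Suc b"] \<open>x = \<infinity>\<close> by simp
    next
      case infinity
      then show ?thesis using \<open>x = \<infinity>\<close> by simp
    qed
  qed
qed


definition mat :: "complex \<Rightarrow> (nat \<Rightarrow> nat) \<Rightarrow> nat \<Rightarrow> nat \<Rightarrow> complex" where
  "mat s \<kappa> i k = (if i = k then 1 else 0) + (if k = \<kappa> i then s else 0)"

lemma rowsum:
  assumes "i < n" "\<kappa> i < n"
  shows "(\<Sum>k<n. mat s \<kappa> i k * x k) = x i + s * x (\<kappa> i)"
proof -
  have "(\<Sum>k<n. mat s \<kappa> i k * x k) = (\<Sum>k<n. (if k = i then x i else 0) + (if k = \<kappa> i then s * x (\<kappa> i) else 0))"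
    by (intro sum.cong) (auto simp: mat_def algebra_simps)
  also have "\<dots> = (\<Sum>k<n. (if k = i then x i else 0)) + (\<Sum>k<n. (if k = \<kappa> i then s * x (\<kappa> i) else 0))"
    by (simp only: sum.distrib)
  also have "\<dots> = x i + s * x (\<kappa> i)" using assms by simp
  finally show ?thesis .
qed

lemma matvec_mat:
  assumes "\<forall>i<n. \<kappa> i < n"
  shows "matvec n (mat s \<kappa>) z = (\<lambda>i. if i < n then z i + s * z (\<kappa> i) else 0)"
  using rowsum assms by (auto simp: matvec_def fun_eq_iff)

lemma tau_eq: "t \<noteq> -1 \<Longrightarrow> t - t / (1 + t) - t * (t / (1 + t)) = (0::complex)"
proof -
  assume "t \<noteq> -1"
  then have "1 + t \<noteq> 0" by (metis add.commute add_eq_0_iff)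
  then show ?thesis by (simp add: field_simps)
qed

lemma mat_inverse:
  assumes kn: "\<forall>i<n. \<kappa> i < n" and ki: "\<forall>i. \<kappa> (\<kappa> i) = \<kappa> i" and t: "t \<noteq> -1"
  shows "inverse_mats n (mat t \<kappa>) (mat (- (t / (1 + t))) \<kappa>)"
  unfolding inverse_mats_def
proof (intro allI impI conjI)
  fix i j assume ij: "i < n" "j < n"
  define \<tau> where "\<tau> = t / (1 + t)"
  have z: "t - \<tau> - t * \<tau> = 0" using tau_eq[OF t] by (simp add: \<tau>_def)
  have "(\<Sum>k<n. mat t \<kappa> i k * mat (- \<tau>) \<kappa> k j) = mat (- \<tau>) \<kappa> i j + t * mat (- \<tau>) \<kappa> (\<kappa> i) j"
    using rowsum[where i=i and n=n and \<kappa>=\<kappa> and s=t and x="\<lambda>k. mat (- \<tau>) \<kappa> k j"] ij kn by simp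
  also have "\<dots> = (if i = j then 1 else 0) + (if j = \<kappa> i then t - \<tau> - t * \<tau> else 0)"
    using spec[OF ki, of i] by (auto simp: mat_def algebra_simps)
  finally show "(\<Sum>k<n. mat t \<kappa> i k * mat (- \<tau>) \<kappa> k j) = (if i = j then 1 else 0)"
    using z by simp
  have "(\<Sum>k<n. mat (- \<tau>) \<kappa> i k * mat t \<kappa> k j) = mat t \<kappa> i j + (- \<tau>) * mat t \<kappa> (\<kappa> i) j"
    using rowsum[where i=i and n=n and \<kappa>=\<kappa> and s="- \<tau>" and x="\<lambda>k. mat t \<kappa> k j"] ij kn by simp
  also have "\<dots> = (if i = j then 1 else 0) + (if j = \<kappa> i then t - \<tau> - t * \<tau> else 0)"
    using spec[OF ki, of i] by (auto simp: mat_def algebra_simps)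
  finally show "(\<Sum>k<n. mat (- \<tau>) \<kappa> i k * mat t \<kappa> k j) = (if i = j then 1 else 0)"
    using z by simp
qed

lemma mat_comp:
  assumes kn: "\<forall>i<n. \<kappa> i < n" and ki: "\<forall>i. \<kappa> (\<kappa> i) = \<kappa> i" and t: "t \<noteq> -1" and i: "i < n"
  shows "matvec n (mat t \<kappa>) (matvec n (mat (- (t / (1 + t))) \<kappa>) z) i = z i"
    and "matvec n (mat (- (t / (1 + t))) \<kappa>) (matvec n (mat t \<kappa>) z) i = z i"
proof -
  define \<tau> where "\<tau> = t / (1 + t)"
  have zz: "t - \<tau> - t * \<tau> = 0" using tau_eq[OF t] by (simp add: \<tau>_def)
  have ki': "\<kappa> i < n" "\<kappa> (\<kappa> i) = \<kappa> i" using kn ki i by auto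
  have "matvec n (mat t \<kappa>) (matvec n (mat (- \<tau>) \<kappa>) z) i = z i + (t - \<tau> - t * \<tau>) * z (\<kappa> i)"
    using i ki' by (simp add: matvec_mat[OF kn] algebra_simps)
  then show "matvec n (mat t \<kappa>) (matvec n (mat (- (t / (1 + t))) \<kappa>) z) i = z i" using zz by (simp add: \<tau>_def)
  have "matvec n (mat (- \<tau>) \<kappa>) (matvec n (mat t \<kappa>) z) i = z i + (t - \<tau> - t * \<tau>) * z (\<kappa> i)"
    using i ki' by (simp add: matvec_mat[OF kn] algebra_simps)
  then show "matvec n (mat (- (t / (1 + t))) \<kappa>) (matvec n (mat t \<kappa>) z) i = z i" using zz by (simp add: \<tau>_def)
qed

lemma mat_W:
  assumes kn: "\<forall>i<n. \<kappa> i < n" and kd: "\<forall>i<d. \<kappa> i < d" and z: "z \<in> Wset n d"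
  shows "matvec n (mat s \<kappa>) z \<in> Wset n d"
  using z kd by (auto simp: Wset_def matvec_mat[OF kn])

lemma rows_inI:
  assumes kn: "\<forall>i<n. \<kappa> i < n" and kd: "\<forall>i<d. \<kappa> i < d"
  shows "\<forall>i<n. inI n d (if i < d then 1 else 0) (\<lambda>z. matvec n (mat s \<kappa>) z i)"
proof (intro allI impI)
  fix i assume i: "i < n"
  have v1: "inI n d (if i < d then 1 else 0) (\<lambda>z. z i)" by (rule inI_var[OF i])
  have "inI n d (if \<kappa> i < d then 1 else 0) (\<lambda>z. z (\<kappa> i))" by (rule inI_var) (use kn i in auto)
  then have v2: "inI n d (if i < d then 1 else 0) (\<lambda>z. z (\<kappa> i))"
    by (rule inI_mono[rotated]) (use kd in auto)
  have "inI n d (0 + (if i < d then 1 else 0)) (\<lambda>z. s * z (\<kappa> i))" by (rule inI_mult[OF inI_const v2])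
  then have "inI n d (if i < d then 1 else 0) (\<lambda>z. z i + s * z (\<kappa> i))" using inI_add v1 by simp
  then show "inI n d (if i < d then 1 else 0) (\<lambda>z. matvec n (mat s \<kappa>) z i)"
    using i by (simp add: matvec_mat[OF kn])
qed


lemma LEAD:
  assumes dn: "d \<le> n" and c: "finite {\<alpha>. c \<alpha> \<noteq> 0}" "\<forall>\<alpha>. c \<alpha> \<noteq> 0 \<longrightarrow> (\<forall>i\<ge>n. \<alpha> i = 0)"
      "\<forall>z. f z = (\<Sum>\<alpha>\<in>{\<alpha>. c \<alpha> \<noteq> 0}. c \<alpha> * monom_fun n \<alpha> z)"
    and m: "multW n d f = enat m"
  shows "\<exists>\<alpha>. c \<alpha> \<noteq> 0 \<and> dg d \<alpha> = m"
proof (rule ccontr)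
  assume nex: "\<not> ?thesis"
  have pf: "poly_fun n f" unfolding poly_fun_def using c by blast
  have Im: "inI n d m f" using MW[OF dn pf, of m] m by simp
  have nI: "\<not> inI n d (Suc m) f" using MW[OF dn pf, of "Suc m"] m by simp
  define S where "S = {\<alpha>. c \<alpha> \<noteq> 0}"
  have finS: "finite S" using c(1) by (simp add: S_def)
  have supS: "\<forall>x\<in>S. \<forall>i\<ge>n. x i = 0" using c(2) by (simp add: S_def)
  have repS: "\<forall>z. f z = (\<Sum>x\<in>S. c x * monom_fun n x z)" using c(3) by (simp add: S_def)
  have "Suc m \<le> dg d \<alpha>" if "c \<alpha> \<noteq> 0" for \<alpha>
  proof -
    have "{x\<in>S. x = \<alpha>} = {\<alpha>}" using that by (auto simp: S_def)
    then have "(\<Sum>x\<in>{x\<in>S. x = \<alpha>}. c x) \<noteq> 0" using that by simp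
    then have "m \<le> dg d \<alpha>" by (rule LC_gen[OF finS supS repS Im])
    moreover have "dg d \<alpha> \<noteq> m" using nex that by blast
    ultimately show ?thesis by simp
  qed
  then have "inI n d (Suc m) f" unfolding inI_def using c by blast
  then show False using nI by simp
qed

lemma comb_rep:
  assumes c1: "\<forall>z. f z = (\<Sum>\<alpha>\<in>{\<alpha>. c1 \<alpha> \<noteq> 0}. c1 \<alpha> * monom_fun n \<alpha> z)" "finite {\<alpha>. c1 \<alpha> \<noteq> 0}"
    and c2: "\<forall>z. g z = (\<Sum>\<alpha>\<in>{\<alpha>. c2 \<alpha> \<noteq> 0}. c2 \<alpha> * monom_fun n \<alpha> z)" "finite {\<alpha>. c2 \<alpha> \<noteq> 0}"
  shows "\<forall>z. f z + t * g z = (\<Sum>\<alpha>\<in>{\<alpha>. c1 \<alpha> \<noteq> 0} \<union> {\<alpha>. c2 \<alpha> \<noteq> 0}. (c1 \<alpha> + t * c2 \<alpha>) * monom_fun n \<alpha> z)"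
proof
  fix z
  define U where "U = {\<alpha>. c1 \<alpha> \<noteq> 0} \<union> {\<alpha>. c2 \<alpha> \<noteq> 0}"
  have fU: "finite U" using c1(2) c2(2) by (simp add: U_def)
  have e1: "f z = (\<Sum>\<alpha>\<in>U. c1 \<alpha> * monom_fun n \<alpha> z)"
    using c1(1) by (simp add: U_def) (rule sum.mono_neutral_left, use fU U_def in auto)
  have e2: "g z = (\<Sum>\<alpha>\<in>U. c2 \<alpha> * monom_fun n \<alpha> z)"
    using c2(1) by (simp add: U_def) (rule sum.mono_neutral_left, use fU U_def in auto)
  show "f z + t * g z = (\<Sum>\<alpha>\<in>U. (c1 \<alpha> + t * c2 \<alpha>) * monom_fun n \<alpha> z)"
    unfolding e1 e2 by (simp add: sum_distrib_left sum.distrib[symmetric] algebra_simps)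
qed


theorem lemma2p1:
  fixes n d :: nat and P :: "nat \<Rightarrow> (nat \<Rightarrow> complex) \<Rightarrow> complex"
  assumes "1 \<le> d" and "d \<le> n"
    and "\<forall>j<n. poly_fun n (P j)"
  shows "\<exists>A B. inverse_mats n A B \<and> matvec n A ` Wset n d = Wset n d \<and>
     (\<forall>j<n. poly_fun n (\<lambda>w. \<Sum>k<n. A j k * P k (matvec n B w))) \<and>
     (\<forall>j<d. multW n d (\<lambda>w. \<Sum>k<n. A j k * P k (matvec n B w))
              = Min {multW n d (P i) | i. i < d}) \<and>
     (\<forall>j. d \<le> j \<and> j < n \<longrightarrow> multW n d (\<lambda>w. \<Sum>k<n. A j k * P k (matvec n B w))
              = Min {multW n d (P i) | i. i < n})"
proof -
  note d1 = assms(1) and dn = assms(2) and Pp = assms(3)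
  define mu where "mu I = Min ((\<lambda>i. multW n d (P i)) ` I)" for I
  have setD: "{multW n d (P i) | i. i < d} = (\<lambda>i. multW n d (P i)) ` {..<d}" by auto
  have setN: "{multW n d (P i) | i. i < n} = (\<lambda>i. multW n d (P i)) ` {..<n}" by auto
  have neD: "{..<d} \<noteq> {}" using d1 by (metis lessThan_iff less_le_trans zero_less_one empty_iff)
  have neN: "{..<n} \<noteq> {}" using d1 dn by (metis lessThan_iff less_le_trans zero_less_one empty_iff)
  obtain K1 where K1: "K1 < d" "multW n d (P K1) = mu {..<d}"
  proof -
    have "mu {..<d} \<in> (\<lambda>i. multW n d (P i)) ` {..<d}" unfolding mu_def by (rule Min_in) (use neD in auto)
    then show ?thesis using that by auto
  qed
  obtain K2' where K2': "K2' < n" "multW n d (P K2') = mu {..<n}"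
  proof -
    have "mu {..<n} \<in> (\<lambda>i. multW n d (P i)) ` {..<n}" unfolding mu_def by (rule Min_in) (use neN in auto)
    then show ?thesis using that by auto
  qed
  have muN_le: "mu {..<n} \<le> multW n d (P i)" if "i < n" for i
    unfolding mu_def using that by (intro Min_le) auto
  have muD_le: "mu {..<d} \<le> multW n d (P i)" if "i < d" for i
    unfolding mu_def using that by (intro Min_le) auto
  define K2 where "K2 = (if multW n d (P K1) = mu {..<n} then K1 else K2')"
  have K2: "K2 < n" "multW n d (P K2) = mu {..<n}" using K1 K2' dn by (auto simp: K2_def)
  have K2d: "K2 = K1 \<or> d \<le> K2"
  proof (rule ccontr)
    assume "\<not> ?thesis"
    then have "K2 < d" "K2 \<noteq> K1" by auto
    then have "K2 = K2'" "multW n d (P K1) \<noteq> mu {..<n}" by (auto simp: K2_def split: if_splits)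
    moreover have "mu {..<d} \<le> mu {..<n}" using muD_le[OF \<open>K2 < d\<close>] K2(2) by simp
    moreover have "mu {..<n} \<le> mu {..<d}" using muN_le[of K1] K1 dn by simp
    ultimately show False using K1(2) by simp
  qed
  define \<kappa> where "\<kappa> j = (if j < d then K1 else K2)" for j
  have kn: "\<forall>i<n. \<kappa> i < n" using K1 K2 dn by (auto simp: \<kappa>_def)
  have kd: "\<forall>i<d. \<kappa> i < d" using K1 by (auto simp: \<kappa>_def)
  have ki: "\<forall>i. \<kappa> (\<kappa> i) = \<kappa> i" using K1 K2d by (auto simp: \<kappa>_def)
  define I where "I j = (if j < d then {..<d} else {..<n})" for j
  have I_fin: "finite (I j)" and I_ne: "I j \<noteq> {}" for j using neD neN by (auto simp: I_def)
  have jI: "j \<in> I j" if "j < n" for j using that by (auto simp: I_def)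
  have kI: "\<kappa> j \<in> I j" if "j < n" for j using that K1 K2 dn by (auto simp: I_def \<kappa>_def)
  have kmin: "multW n d (P (\<kappa> j)) = mu (I j)" for j using K1 K2 by (auto simp: I_def \<kappa>_def)
  define cP where "cP i = (SOME c. finite {\<alpha>. c \<alpha> \<noteq> 0} \<and> (\<forall>\<alpha>. c \<alpha> \<noteq> 0 \<longrightarrow> (\<forall>i\<ge>n. \<alpha> i = 0)) \<and>
      (\<forall>z. P i z = (\<Sum>\<alpha>\<in>{\<alpha>. c \<alpha> \<noteq> 0}. c \<alpha> * monom_fun n \<alpha> z)))" for i
  have cP: "finite {\<alpha>. cP i \<alpha> \<noteq> 0} \<and> (\<forall>\<alpha>. cP i \<alpha> \<noteq> 0 \<longrightarrow> (\<forall>i\<ge>n. \<alpha> i = 0)) \<and>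
      (\<forall>z. P i z = (\<Sum>\<alpha>\<in>{\<alpha>. cP i \<alpha> \<noteq> 0}. cP i \<alpha> * monom_fun n \<alpha> z))" if "i < n" for i
  proof -
    have "\<exists>c. finite {\<alpha>. c \<alpha> \<noteq> 0} \<and> (\<forall>\<alpha>. c \<alpha> \<noteq> 0 \<longrightarrow> (\<forall>i\<ge>n. \<alpha> i = 0)) \<and>
      (\<forall>z. P i z = (\<Sum>\<alpha>\<in>{\<alpha>. c \<alpha> \<noteq> 0}. c \<alpha> * monom_fun n \<alpha> z))"
      using Pp that unfolding poly_fun_def by blast
    then show ?thesis unfolding cP_def by (rule someI_ex)
  qed
  define lead where "lead j = (SOME \<alpha>. cP (\<kappa> j) \<alpha> \<noteq> 0 \<and> enat (dg d \<alpha>) = multW n d (P (\<kappa> j)))" for j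
  define T where "T = (\<lambda>j. - (cP j (lead j)) / cP (\<kappa> j) (lead j)) ` {..<n} \<union> {-1}"
  have "finite T" by (simp add: T_def)
  then obtain t :: complex where t: "t \<notin> T" using ex_new_if_finite[OF infinite_UNIV_char_0] by blast
  have tm1: "t \<noteq> -1" using t by (simp add: T_def)
  define \<tau> where "\<tau> = t / (1 + t)"
  define A where "A = mat t \<kappa>"
  define B where "B = mat (- \<tau>) \<kappa>"
  have inv: "inverse_mats n A B" unfolding A_def B_def \<tau>_def by (rule mat_inverse[OF kn ki tm1])
  have AB: "matvec n A (matvec n B z) i = z i" and BA: "matvec n B (matvec n A z) i = z i" if "i < n" for z i
    using mat_comp[OF kn ki tm1 that] by (auto simp: A_def B_def \<tau>_def)
  have Wimg: "matvec n A ` Wset n d = Wset n d"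
  proof
    show "matvec n A ` Wset n d \<subseteq> Wset n d" unfolding A_def using mat_W[OF kn kd] by blast
  next
    show "Wset n d \<subseteq> matvec n A ` Wset n d"
    proof
      fix w assume w: "w \<in> Wset n d"
      have "matvec n A (matvec n B w) = w"
      proof
        fix i show "matvec n A (matvec n B w) i = w i"
          using AB[of i w] w by (cases "i < n") (auto simp: Wset_def matvec_def)
      qed
      moreover have "matvec n B w \<in> Wset n d" unfolding B_def using mat_W[OF kn kd w] .
      ultimately show "w \<in> matvec n A ` Wset n d" by (metis image_eqI)
    qed
  qed
  define Q where "Q j w = (\<Sum>k<n. A j k * P k (matvec n B w))" for j w
  define G where "G j z = P j z + t * P (\<kappa> j) z" for j z
  have QG: "Q j = (\<lambda>w. G j (matvec n B w))" if "j < n" for j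
    unfolding Q_def G_def A_def using rowsum[OF that] kn that by (auto simp: fun_eq_iff)
  have GQ: "G j = (\<lambda>z. Q j (matvec n A z))" if "j < n" for j
  proof
    fix z
    have "P k (matvec n B (matvec n A z)) = P k z" if "k < n" for k
      by (rule poly_dep) (use Pp that BA in auto)
    then show "G j z = Q j (matvec n A z)"
      using QG[OF that] kn that by (auto simp: G_def)
  qed
  have rowsB: "\<forall>i<n. inI n d (if i < d then 1 else 0) (\<lambda>z. matvec n B z i)"
    unfolding B_def by (rule rows_inI[OF kn kd])
  have rowsA: "\<forall>i<n. inI n d (if i < d then 1 else 0) (\<lambda>z. matvec n A z i)"
    unfolding A_def by (rule rows_inI[OF kn kd])
  have QGiff: "inI n d q (Q j) \<longleftrightarrow> inI n d q (G j)" if "j < n" for j q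
  proof
    assume "inI n d q (Q j)"
    then have "inI n d q (\<lambda>z. Q j (matvec n A z))" by (rule inI_comp[OF dn _ rowsA])
    then show "inI n d q (G j)" using GQ[OF that] by simp
  next
    assume "inI n d q (G j)"
    then have "inI n d q (\<lambda>z. G j (matvec n B z))" by (rule inI_comp[OF dn _ rowsB])
    then show "inI n d q (Q j)" using QG[OF that] by simp
  qed
  have PI: "inI n d q (P i) \<longleftrightarrow> enat q \<le> multW n d (P i)" if "i < n" for i q
    using MW[OF dn] Pp that by simp
  have KEY: "inI n d q (G j) \<longleftrightarrow> (\<forall>i\<in>I j. inI n d q (P i))" if j: "j < n" for j q
  proof
    have In: "i \<in> I j \<Longrightarrow> i < n" for i using dn by (auto simp: I_def split: if_splits)
    assume G: "inI n d q (G j)"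
    have "enat q \<le> mu (I j)"
    proof (cases "multW n d (P (\<kappa> j))")
      case infinity
      then show ?thesis using kmin by simp
    next
      case (enat m)
      have kjn: "\<kappa> j < n" using kn j by simp
      have "\<exists>\<alpha>. cP (\<kappa> j) \<alpha> \<noteq> 0 \<and> dg d \<alpha> = m" using cP[OF kjn] by (intro LEAD[OF dn _ _ _ enat]) auto
      then have "\<exists>\<alpha>. cP (\<kappa> j) \<alpha> \<noteq> 0 \<and> enat (dg d \<alpha>) = multW n d (P (\<kappa> j))" using enat by auto
      then have L: "cP (\<kappa> j) (lead j) \<noteq> 0 \<and> enat (dg d (lead j)) = multW n d (P (\<kappa> j))"
        unfolding lead_def by (rule someI_ex)
      define \<alpha> where "\<alpha> = lead j"
      define U where "U = {\<alpha>. cP j \<alpha> \<noteq> 0} \<union> {\<alpha>. cP (\<kappa> j) \<alpha> \<noteq> 0}"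
      have repG: "\<forall>z. G j z = (\<Sum>x\<in>U. (cP j x + t * cP (\<kappa> j) x) * monom_fun n x z)"
        unfolding G_def U_def by (rule comb_rep) (use cP[OF j] cP[OF kjn] in auto)
      have fU: "finite U" using cP[OF j] cP[OF kjn] by (simp add: U_def)
      have sU: "\<forall>x\<in>U. \<forall>i\<ge>n. x i = 0" using cP[OF j] cP[OF kjn] by (auto simp: U_def)
      have aU: "\<alpha> \<in> U" using L by (simp add: U_def \<alpha>_def)
      have "cP j \<alpha> + t * cP (\<kappa> j) \<alpha> \<noteq> 0"
      proof
        assume "cP j \<alpha> + t * cP (\<kappa> j) \<alpha> = 0"
        then have "t = - (cP j \<alpha>) / cP (\<kappa> j) \<alpha>" using L by (simp add: \<alpha>_def field_simps add_eq_0_iff)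
        then have "t \<in> T" using j by (auto simp: T_def \<alpha>_def)
        then show False using t by simp
      qed
      moreover have "{x\<in>U. x = \<alpha>} = {\<alpha>}" using aU by auto
      ultimately have "(\<Sum>x\<in>{x\<in>U. x = \<alpha>}. cP j x + t * cP (\<kappa> j) x) \<noteq> 0" by simp
      then have "q \<le> dg d \<alpha>" by (rule LC_gen[OF fU sU repG G])
      then have "enat q \<le> enat (dg d \<alpha>)" by simp
      then show ?thesis using L kmin[of j] by (simp add: \<alpha>_def)
    qed
    then have "enat q \<le> multW n d (P i)" if "i \<in> I j" for i
      using that unfolding mu_def using I_fin by (auto intro: order_trans Min_le)
    then show "\<forall>i\<in>I j. inI n d q (P i)" using PI In by blast
  next
    assume H: "\<forall>i\<in>I j. inI n d q (P i)"
    have "inI n d (0 + q) (\<lambda>z. t * P (\<kappa> j) z)" by (rule inI_mult[OF inI_const]) (use H kI[OF j] in auto)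
    then show "inI n d q (G j)" unfolding G_def using H jI[OF j] by (auto intro: inI_add)
  qed
  have Gpoly: "inI n d 0 (G j)" if "j < n" for j
  proof -
    have "inI n d 0 (P i)" if "i < n" for i using Pp that poly_fun_inI by blast
    then show ?thesis using KEY[OF that] dn by (auto simp: I_def)
  qed
  have Qpoly: "poly_fun n (Q j)" if "j < n" for j
    using QGiff[OF that] Gpoly[OF that] poly_fun_inI by blast
  have Qm: "multW n d (Q j) = mu (I j)" if j: "j < n" for j
  proof (rule enat_eqI)
    fix q
    have "enat q \<le> multW n d (Q j) \<longleftrightarrow> inI n d q (Q j)" by (rule MW[OF dn Qpoly[OF j]])
    also have "\<dots> \<longleftrightarrow> (\<forall>i\<in>I j. inI n d q (P i))" using QGiff[OF j] KEY[OF j] by simp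
    also have "\<dots> \<longleftrightarrow> (\<forall>i\<in>I j. enat q \<le> multW n d (P i))"
      using PI dn by (auto simp: I_def)
    also have "\<dots> \<longleftrightarrow> enat q \<le> mu (I j)" unfolding mu_def using I_fin I_ne by simp
    finally show "enat q \<le> multW n d (Q j) \<longleftrightarrow> enat q \<le> mu (I j)" .
  qed
  have F1: "\<forall>j<n. poly_fun n (\<lambda>w. \<Sum>k<n. A j k * P k (matvec n B w))"
    using Qpoly unfolding Q_def by blast
  have F2: "\<forall>j<d. multW n d (\<lambda>w. \<Sum>k<n. A j k * P k (matvec n B w)) = Min {multW n d (P i) | i. i < d}"
  proof (intro allI impI)
    fix j assume j: "j < d"
    then have "j < n" using dn by simp
    then show "multW n d (\<lambda>w. \<Sum>k<n. A j k * P k (matvec n B w)) = Min {multW n d (P i) | i. i < d}"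
      using Qm[of j] j unfolding Q_def setD mu_def I_def by simp
  qed
  have F3: "\<forall>j. d \<le> j \<and> j < n \<longrightarrow> multW n d (\<lambda>w. \<Sum>k<n. A j k * P k (matvec n B w)) = Min {multW n d (P i) | i. i < n}"
  proof (intro allI impI)
    fix j assume j: "d \<le> j \<and> j < n"
    then show "multW n d (\<lambda>w. \<Sum>k<n. A j k * P k (matvec n B w)) = Min {multW n d (P i) | i. i < n}"
      using Qm[of j] unfolding Q_def setN mu_def I_def by simp
  qed
  show ?thesis by (rule exI[of _ A], rule exI[of _ B]) (intro conjI inv Wimg F1 F2 F3)
qed

end
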